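(* Let $\alpha\in(-1,1)$. For every integer $k\ge0$, $$\Phi_k=\alpha\,\tilde\Phi_{k+1}+\beta_k\,\tilde\Phi_k,\qquad \frac{\partial\Phi_k}{\partial\alpha}=-4\,\tilde\Phi_{k+1}+\gamma_k\,\tilde\Phi_k,$$ where $\beta_k=\dfrac{K_{k,k}}{\tilde K_{k,k}}$ and $\gamma_k=\dfrac{1}{\tilde K_{k,k}}\dfrac{\partial K_{k,k}}{\partial\alpha}$.
   Context: For a parameter $\alpha\in(-1,1)$ define on $[-1,1]$ the weights $\omega(\mu)=(1+\alpha\mu)^{-4}$ and $\tilde\omega(\mu)=(1+\alpha\mu)^{-5}$. Let $\{\phi_k\}_{k\ge0}$ (resp. $\{\tilde\phi_k\}_{k\ge0}$) be the monic orthogonal polynomials on $[-1,1]$ with respect to $\omega$ (resp. $\tilde\omega$): $\phi_k$ is monic of degree $k$ and $\int_{-1}^1\phi_j\phi_k\,\omega\,d\mu=0$ for $j\neq k$ (similarly for $\tilde\phi_k$ with $\tilde\omega$); their coefficients depend smoothly on $\alpha$. Set $\Phi_k=\omega\phi_k$, $\tilde\Phi_k=\tilde\omega\tilde\phi_k$, $K_{j,k}=\int_{-1}^1\mu^j\phi_k\,\omega\,d\mu$ and $\tilde K_{j,k}=\int_{-1}^1\mu^j\tilde\phi_k\,\tilde\omega\,d\mu$ (so $K_{k,k}=\int_{-1}^1\phi_k^2\omega\,d\mu>0$ and $\tilde K_{k,k}>0$). *)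

theory Defs
  imports "HOL-Analysis.Analysis" "HOL-Computational_Algebra.Polynomial"
begin

definition omega :: "real \<Rightarrow> real \<Rightarrow> real" where
  "omega a \<mu> = inverse ((1 + a * \<mu>) ^ 4)"

definition omega_t :: "real \<Rightarrow> real \<Rightarrow> real" where
  "omega_t a \<mu> = inverse ((1 + a * \<mu>) ^ 5)"

definition monic_orth_family :: "(real \<Rightarrow> real) \<Rightarrow> (nat \<Rightarrow> real poly) \<Rightarrow> bool" where
  "monic_orth_family w phi \<longleftrightarrow>
     (\<forall>k. degree (phi k) = k \<and> lead_coeff (phi k) = 1) \<and>
     (\<forall>j k. j \<noteq> k \<longrightarrow>
        integral {-1..1} (\<lambda>\<mu>. poly (phi j) \<mu> * poly (phi k) \<mu> * w \<mu>) = 0)"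

definition orth_polys :: "(real \<Rightarrow> real) \<Rightarrow> nat \<Rightarrow> real poly" where
  "orth_polys w = (THE phi. monic_orth_family w phi)"

definition phi :: "real \<Rightarrow> nat \<Rightarrow> real poly" where
  "phi a = orth_polys (omega a)"

definition phi_t :: "real \<Rightarrow> nat \<Rightarrow> real poly" where
  "phi_t a = orth_polys (omega_t a)"

definition Phi :: "real \<Rightarrow> nat \<Rightarrow> real \<Rightarrow> real" where
  "Phi a k \<mu> = omega a \<mu> * poly (phi a k) \<mu>"

definition Phi_t :: "real \<Rightarrow> nat \<Rightarrow> real \<Rightarrow> real" where
  "Phi_t a k \<mu> = omega_t a \<mu> * poly (phi_t a k) \<mu>"

definition K :: "real \<Rightarrow> nat \<Rightarrow> nat \<Rightarrow> real" where
  "K a j k = integral {-1..1} (\<lambda>\<mu>. \<mu> ^ j * poly (phi a k) \<mu> * omega a \<mu>)"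

definition K_t :: "real \<Rightarrow> nat \<Rightarrow> nat \<Rightarrow> real" where
  "K_t a j k = integral {-1..1} (\<lambda>\<mu>. \<mu> ^ j * poly (phi_t a k) \<mu> * omega_t a \<mu>)"

end

theory Submission
  imports Defs
begin


definition ip :: "(real \<Rightarrow> real) \<Rightarrow> real poly \<Rightarrow> real poly \<Rightarrow> real" where
  "ip w p q = integral {-1..1} (\<lambda>\<mu>. poly p \<mu> * poly q \<mu> * w \<mu>)"

definition mom :: "(real \<Rightarrow> real) \<Rightarrow> nat \<Rightarrow> real" where
  "mom w n = integral {-1..1} (\<lambda>\<mu>. \<mu>^n * w \<mu>)"

definition ipns :: "nat \<Rightarrow> nat \<Rightarrow> (real \<Rightarrow> real) \<Rightarrow> real poly \<Rightarrow> real poly \<Rightarrow> real" where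
  "ipns n s w p q = (\<Sum>i\<le>n. \<Sum>j\<le>n. coeff p i * coeff q j * mom w (i+j+s))"

fun gs :: "(real \<Rightarrow> real) \<Rightarrow> nat \<Rightarrow> real poly" where
  "gs w k = monom 1 k - (\<Sum>j<k. smult (ipns k 0 w (monom 1 k) (gs w j) / ipns k 0 w (gs w j) (gs w j)) (gs w j))"

declare gs.simps[simp del]

definition good :: "(real \<Rightarrow> real) \<Rightarrow> bool" where
  "good w \<longleftrightarrow> continuous_on {-1..1} w \<and> (\<forall>\<mu>\<in>{-1..1}. w \<mu> > 0)"

lemma poly_bound: fixes p :: "real poly" shows "degree p \<le> n \<Longrightarrow> poly p x = (\<Sum>i\<le>n. coeff p i * x^i)"
  apply (subst poly_altdef)
  by (rule sum.mono_neutral_left) (auto simp: coeff_eq_0)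

lemma integrable_pp:
  fixes w :: "real \<Rightarrow> real" and p q :: "real poly"
  assumes "continuous_on {-1..1} w"
  shows "(\<lambda>\<mu>. \<mu>^s * poly p \<mu> * poly q \<mu> * w \<mu>) integrable_on {-1..1}"
  apply (rule integrable_continuous_interval) using assms by (intro continuous_intros) auto

lemma integrable_pp2:
  fixes w :: "real \<Rightarrow> real" and p q :: "real poly"
  assumes "continuous_on {-1..1} w"
  shows "(\<lambda>\<mu>. poly p \<mu> * poly q \<mu> * w \<mu>) integrable_on {-1..1}"
  apply (rule integrable_continuous_interval) using assms by (intro continuous_intros) auto

lemma ipns_eq:
  fixes w :: "real \<Rightarrow> real" and p q :: "real poly"
  assumes w: "continuous_on {-1..1} w" and "degree p \<le> n" "degree q \<le> n"
  shows "ipns n s w p q = integral {-1..1} (\<lambda>\<mu>. \<mu>^s * poly p \<mu> * poly q \<mu> * w \<mu>)"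
proof -
  have "(\<lambda>\<mu>. \<mu>^s * poly p \<mu> * poly q \<mu> * w \<mu>) =
        (\<lambda>\<mu>. \<Sum>i\<le>n. \<Sum>j\<le>n. coeff p i * coeff q j * (\<mu>^(i+j+s) * w \<mu>))"
    using assms by (auto simp: poly_bound[of p n] poly_bound[of q n] sum_distrib_left
         sum_distrib_right power_add mult_ac intro!: ext sum.cong)
  moreover have "integral {-1..1} (\<lambda>\<mu>. \<Sum>i\<le>n. \<Sum>j\<le>n. coeff p i * coeff q j * (\<mu>^(i+j+s) * w \<mu>))
     = (\<Sum>i\<le>n. \<Sum>j\<le>n. coeff p i * coeff q j * mom w (i+j+s))"
  proof -
    have I: "(\<lambda>\<mu>. \<mu>^m * w \<mu>) integrable_on {-1..1}" for m
      by (rule integrable_continuous_interval, intro continuous_intros w)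
    show ?thesis
      unfolding mom_def
      by (subst integral_sum, simp, intro integrable_sum, simp, rule integrable_cmul[OF I, simplified],
          rule sum.cong, simp, subst integral_sum, simp, rule integrable_cmul[OF I, simplified], simp)
  qed
  ultimately show ?thesis unfolding ipns_def by simp
qed

lemma ip_sym: "ip w p q = ip w q p"
  unfolding ip_def by (simp add: mult_ac)

lemma ip_add:
  fixes w :: "real \<Rightarrow> real"
  assumes "continuous_on {-1..1} w"
  shows "ip w (p + q) r = ip w p r + ip w q r"
  unfolding ip_def using integrable_pp2[OF assms]
  by (simp add: distrib_right integral_add)

lemma ip_smult:
  fixes w :: "real \<Rightarrow> real"
  shows "ip w (smult c p) r = c * ip w p r"
  unfolding ip_def by (simp add: mult.assoc)

lemma ip_diff:
  fixes w :: "real \<Rightarrow> real"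
  assumes "continuous_on {-1..1} w"
  shows "ip w (p - q) r = ip w p r - ip w q r"
  unfolding ip_def using integrable_pp2[OF assms]
  by (simp add: left_diff_distrib integral_diff)

lemma ip_sum:
  fixes w :: "real \<Rightarrow> real"
  assumes "continuous_on {-1..1} w" "finite A"
  shows "ip w (\<Sum>a\<in>A. f a) r = (\<Sum>a\<in>A. ip w (f a) r)"
  using assms(2)
proof (induction A rule: finite_induct)
  case empty then show ?case by (simp add: ip_def)
next
  case (insert x F) then show ?case by (simp add: ip_add[OF assms(1)])
qed

lemma ip_pos:
  fixes w :: "real \<Rightarrow> real"
  assumes "good w" "p \<noteq> 0"
  shows "ip w p p > 0"
proof -
  have c: "continuous_on {-1..1} (\<lambda>\<mu>. poly p \<mu> * poly p \<mu> * w \<mu>)"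
    using assms(1) unfolding good_def by (intro continuous_intros) auto
  have nn: "\<And>x. x \<in> {-1..1} \<Longrightarrow> poly p x * poly p x * w x \<ge> 0"
  proof -
    fix x :: real assume "x \<in> {-1..1}"
    then have "w x \<ge> 0" using assms(1) unfolding good_def by (auto intro: less_imp_le)
    moreover have "poly p x * poly p x \<ge> 0" by simp
    ultimately show "poly p x * poly p x * w x \<ge> 0" by (rule mult_nonneg_nonneg[rotated])
  qed
  have ge: "ip w p p \<ge> 0" unfolding ip_def
    by (rule integral_nonneg[OF integrable_continuous_real[OF c]]) (use nn in auto)
  moreover have "ip w p p \<noteq> 0"
  proof
    assume "ip w p p = 0"
    then have "\<forall>x\<in>{-1..1}. poly p x * poly p x * w x = 0"
      using integral_eq_0_iff[OF c _ nn] unfolding ip_def by auto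
    then have "{-1..1::real} \<subseteq> {x. poly p x = 0}"
      using assms(1) unfolding good_def by force
    moreover have "infinite {-1..1::real}" by simp
    ultimately show False using poly_roots_finite[OF assms(2)] finite_subset by blast
  qed
  ultimately show ?thesis by simp
qed

definition monic_fam :: "(nat \<Rightarrow> real poly) \<Rightarrow> bool" where
  "monic_fam f \<longleftrightarrow> (\<forall>k. degree (f k) = k \<and> lead_coeff (f k) = 1)"

lemma span:
  assumes "monic_fam f" "degree (q::real poly) \<le> n"
  shows "\<exists>c. q = (\<Sum>j\<le>n. smult (c j) (f j))"
  using assms(2)
proof (induction n arbitrary: q)
  case 0
  have "degree (f 0) = 0" "coeff (f 0) 0 = 1" using assms(1) unfolding monic_fam_def by metis+
  then have "f 0 = 1" using degree_0_id[of "f 0"] by (simp add: one_pCons)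
  moreover have "q = [:coeff q 0:]" using 0 by (metis degree_0_id le_0_eq)
  ultimately show ?case by (intro exI[of _ "\<lambda>_. coeff q 0"]) simp
next
  case (Suc n)
  define q' where "q' = q - smult (coeff q (Suc n)) (f (Suc n))"
  have "degree q' \<le> n"
  proof (rule degree_le, intro allI impI)
    fix i assume "n < i"
    show "coeff q' i = 0"
    proof (cases "i = Suc n")
      case True
      have "coeff (f (Suc n)) (Suc n) = 1" using assms(1) unfolding monic_fam_def by metis
      then show ?thesis using True unfolding q'_def by simp
    next
      case False
      then have "i > Suc n" using \<open>n < i\<close> by simp
      then show ?thesis using Suc.prems assms(1) unfolding q'_def monic_fam_def
        by (simp add: coeff_eq_0)
    qed
  qed
  then obtain c where c: "q' = (\<Sum>j\<le>n. smult (c j) (f j))" using Suc.IH by blast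
  show ?case
  proof (intro exI[of _ "c(Suc n := coeff q (Suc n))"])
    have "(\<Sum>j\<le>n. smult ((c(Suc n := coeff q (Suc n))) j) (f j)) = (\<Sum>j\<le>n. smult (c j) (f j))"
      by (rule sum.cong) auto
    then show "q = (\<Sum>j\<le>Suc n. smult ((c(Suc n := coeff q (Suc n))) j) (f j))"
      using c unfolding q'_def by (simp add: algebra_simps)
  qed
qed

lemma mof_monic: "monic_orth_family w f \<Longrightarrow> monic_fam f"
  unfolding monic_orth_family_def monic_fam_def by blast

lemma mof_orth: "monic_orth_family w f \<Longrightarrow> j \<noteq> k \<Longrightarrow> ip w (f j) (f k) = 0"
  unfolding monic_orth_family_def ip_def by blast

lemma mof_deg: "monic_orth_family w f \<Longrightarrow> degree (f k) = k"
  unfolding monic_orth_family_def by blast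

lemma mof_lead: "monic_orth_family w f \<Longrightarrow> coeff (f k) k = 1"
  unfolding monic_orth_family_def by metis

lemma mof_nz: "monic_orth_family w f \<Longrightarrow> f k \<noteq> 0"
  using mof_lead[of w f k] by auto

lemma orth_lower:
  fixes w :: "real \<Rightarrow> real"
  assumes w: "continuous_on {-1..1} w" and f: "monic_orth_family w f" and "degree q < k"
  shows "ip w q (f k) = 0"
proof -
  obtain m where k: "k = Suc m" using assms(3) by (cases k) auto
  obtain c where c: "q = (\<Sum>j\<le>m. smult (c j) (f j))"
    using span[OF mof_monic[OF f], of q m] assms(3) k by auto
  have "ip w q (f k) = (\<Sum>j\<le>m. c j * ip w (f j) (f k))"
    unfolding c by (simp add: ip_sum[OF w] ip_smult)
  also have "\<dots> = 0" using mof_orth[OF f] k by (intro sum.neutral) auto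
  finally show ?thesis .
qed

lemma mof_unique:
  fixes w :: "real \<Rightarrow> real"
  assumes w: "good w" and f: "monic_orth_family w f" and g: "monic_orth_family w g"
  shows "f = g"
proof
  fix k
  have wc: "continuous_on {-1..1} w" using w unfolding good_def by blast
  define d where "d = f k - g k"
  show "f k = g k"
  proof (rule ccontr)
    assume "f k \<noteq> g k"
    then have dnz: "d \<noteq> 0" unfolding d_def by simp
    have "degree d \<le> k" unfolding d_def using mof_deg[OF f] mof_deg[OF g]
      by (metis degree_diff_le order_refl)
    moreover have "coeff d k = 0" unfolding d_def using mof_lead[OF f] mof_lead[OF g] by simp
    ultimately have "degree d < k" using dnz
      by (metis le_neq_implies_less leading_coeff_0_iff)
    have "ip w d d = ip w (f k) d - ip w (g k) d"
      unfolding d_def by (rule ip_diff[OF wc])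
    also have "\<dots> = ip w d (f k) - ip w d (g k)" by (simp add: ip_sym)
    also have "\<dots> = 0" using orth_lower[OF wc f \<open>degree d < k\<close>] orth_lower[OF wc g \<open>degree d < k\<close>] by simp
    finally show False using ip_pos[OF w dnz] by simp
  qed
qed

lemma gs_deg_lead: "degree (gs w k) = k \<and> coeff (gs w k) k = 1"
proof (induction k rule: less_induct)
  case (less k)
  define S where "S = (\<Sum>j<k. smult (ipns k 0 w (monom 1 k) (gs w j) / ipns k 0 w (gs w j) (gs w j)) (gs w j))"
  have g: "gs w k = monom 1 k - S" unfolding S_def by (rule gs.simps)
  have "degree S \<le> k" unfolding S_def
    by (rule degree_sum_le) (use less in \<open>auto intro: order_trans[OF degree_smult_le]\<close>)
  moreover have "coeff S k = 0" unfolding S_def coeff_sum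
    using less by (intro sum.neutral) (auto simp: coeff_eq_0)
  ultimately have c: "coeff (gs w k) k = 1" and d: "degree (gs w k) \<le> k"
    unfolding g by (auto intro: degree_diff_le simp: degree_monom_eq)
  moreover have "k \<le> degree (gs w k)" using c by (intro le_degree) simp
  ultimately show ?case by simp
qed

lemma gs_deg: "degree (gs w k) = k" and gs_lead: "coeff (gs w k) k = 1"
  using gs_deg_lead by auto

lemma gs_nz: "gs w k \<noteq> 0" using gs_lead[of w k] by auto

lemma ipns_ip:
  fixes w :: "real \<Rightarrow> real"
  assumes "continuous_on {-1..1} w" "degree p \<le> n" "degree q \<le> n"
  shows "ipns n 0 w p q = ip w p q"
  using ipns_eq[OF assms, of 0] unfolding ip_def by simp

lemma gs_orth:
  fixes w :: "real \<Rightarrow> real"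
  assumes w: "good w"
  shows "\<forall>i<k. ip w (gs w k) (gs w i) = 0"
proof (induction k rule: less_induct)
  case (less k)
  have wc: "continuous_on {-1..1} w" using w unfolding good_def by blast
  have orth: "ip w (gs w j) (gs w i) = 0" if "j < k" "i < k" "i \<noteq> j" for i j
  proof (cases "i < j")
    case True then show ?thesis using less that by auto
  next
    case False then have "j < i" using that by simp
    then show ?thesis using less that ip_sym by metis
  qed
  show ?case
  proof (intro allI impI)
    fix i assume ik: "i < k"
    define c where "c j = ipns k 0 w (monom 1 k) (gs w j) / ipns k 0 w (gs w j) (gs w j)" for j
    have g: "gs w k = monom 1 k - (\<Sum>j<k. smult (c j) (gs w j))" unfolding c_def by (rule gs.simps)
    have "ip w (gs w k) (gs w i) = ip w (monom 1 k) (gs w i) - (\<Sum>j<k. c j * ip w (gs w j) (gs w i))"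
      unfolding g by (simp add: ip_diff[OF wc] ip_sum[OF wc] ip_smult)
    also have "(\<Sum>j<k. c j * ip w (gs w j) (gs w i)) = (\<Sum>j<k. if j = i then c i * ip w (gs w i) (gs w i) else 0)"
      using orth ik by (intro sum.cong) auto
    also have "\<dots> = c i * ip w (gs w i) (gs w i)" using ik by simp
    also have "c i = ip w (monom 1 k) (gs w i) / ip w (gs w i) (gs w i)"
      unfolding c_def using ik by (subst (1 2) ipns_ip[OF wc]) (auto simp: gs_deg degree_monom_eq)
    finally show "ip w (gs w k) (gs w i) = 0" using ip_pos[OF w gs_nz[of w i]] by simp
  qed
qed

lemma gs_mof:
  fixes w :: "real \<Rightarrow> real"
  assumes w: "good w"
  shows "monic_orth_family w (gs w)"
  unfolding monic_orth_family_def
proof (intro conjI allI impI)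
  fix k show "degree (gs w k) = k" by (rule gs_deg)
  show "lead_coeff (gs w k) = 1" by (simp add: gs_deg gs_lead)
next
  fix j k :: nat assume "j \<noteq> k"
  then have "ip w (gs w j) (gs w k) = 0"
    using gs_orth[OF w, of j] gs_orth[OF w, of k] ip_sym by (metis linorder_neqE_nat)
  then show "integral {-1..1} (\<lambda>\<mu>. poly (gs w j) \<mu> * poly (gs w k) \<mu> * w \<mu>) = 0"
    unfolding ip_def .
qed

lemma orth_polys_gs:
  fixes w :: "real \<Rightarrow> real"
  assumes w: "good w"
  shows "orth_polys w = gs w"
  unfolding orth_polys_def
proof (rule the_equality)
  show "monic_orth_family w (gs w)" by (rule gs_mof[OF w])
  fix f assume "monic_orth_family w f"
  then show "f = gs w" using mof_unique[OF w _ gs_mof[OF w]] by blast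
qed

lemma orth_polys_mof:
  fixes w :: "real \<Rightarrow> real"
  assumes w: "good w"
  shows "monic_orth_family w (orth_polys w)"
  using gs_mof[OF w] orth_polys_gs[OF w] by simp

lemma expand2:
  fixes w :: "real \<Rightarrow> real"
  assumes w: "good w" and f: "monic_orth_family w f" and R: "degree R \<le> Suc k"
    and ort: "\<forall>j<k. ip w R (f j) = 0"
  shows "R = smult (coeff R (Suc k)) (f (Suc k)) + smult (ip w R (f k) / ip w (f k) (f k)) (f k)"
proof -
  have wc: "continuous_on {-1..1} w" using w unfolding good_def by blast
  define R' where "R' = R - smult (coeff R (Suc k)) (f (Suc k))"
  have "degree R' \<le> k"
  proof (rule degree_le, intro allI impI)
    fix i assume "k < i"
    show "coeff R' i = 0"
    proof (cases "i = Suc k")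
      case True
      have "coeff (f (Suc k)) (Suc k) = 1" by (rule mof_lead[OF f])
      then show ?thesis using True unfolding R'_def by simp
    next
      case False
      then have "i > Suc k" using \<open>k < i\<close> by simp
      then show ?thesis using R mof_deg[OF f, of "Suc k"] unfolding R'_def
        by (simp add: coeff_eq_0)
    qed
  qed
  then obtain c where c: "R' = (\<Sum>j\<le>k. smult (c j) (f j))"
    using span[OF mof_monic[OF f]] by blast
  have ipR': "ip w R' (f i) = c i * ip w (f i) (f i)" if "i \<le> k" for i
  proof -
    have "ip w R' (f i) = (\<Sum>j\<le>k. c j * ip w (f j) (f i))"
      unfolding c by (simp add: ip_sum[OF wc] ip_smult)
    also have "\<dots> = (\<Sum>j\<le>k. if j = i then c i * ip w (f i) (f i) else 0)"
      using mof_orth[OF f] by (intro sum.cong) auto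
    also have "\<dots> = c i * ip w (f i) (f i)" using that by simp
    finally show ?thesis .
  qed
  have ipR: "ip w R' (f i) = ip w R (f i)" if "i \<le> k" for i
    unfolding R'_def using that mof_orth[OF f, of "Suc k" i]
    by (simp add: ip_diff[OF wc] ip_smult)
  have pos: "ip w (f i) (f i) > 0" for i by (rule ip_pos[OF w mof_nz[OF f]])
  have c0: "c j = 0" if "j < k" for j
    using ipR'[of j] ipR[of j] ort that pos[of j] by simp
  have ck: "c k = ip w R (f k) / ip w (f k) (f k)"
    using ipR'[of k] ipR[of k] pos[of k] by (simp add: field_simps)
  have "R' = (\<Sum>j\<le>k. if j = k then smult (c k) (f k) else 0)"
    unfolding c using c0 by (intro sum.cong) auto
  also have "\<dots> = smult (c k) (f k)" by simp
  finally show ?thesis unfolding R'_def ck by (simp add: algebra_simps)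
qed




abbreviation "U \<equiv> {-1<..<(1::real)}"

lemma pos1:
  fixes a \<mu> :: real
  assumes "a \<in> U" "\<mu> \<in> {-1..1}"
  shows "1 + a * \<mu> > 0"
proof -
  have "\<bar>a\<bar> < 1" "\<bar>\<mu>\<bar> \<le> 1" using assms by auto
  then have "\<bar>a\<bar> * \<bar>\<mu>\<bar> < 1"
    using mult_left_le[of "\<bar>\<mu>\<bar>" "\<bar>a\<bar>"] by simp
  then have "\<bar>a * \<mu>\<bar> < 1" by (simp add: abs_mult)
  then show ?thesis by linarith
qed

lemma cont_omega: "a \<in> U \<Longrightarrow> continuous_on {-1..1} (omega a)"
  unfolding omega_def using pos1[of a]
  by (intro continuous_intros) (auto simp: less_imp_neq[symmetric])

lemma cont_omega_t: "a \<in> U \<Longrightarrow> continuous_on {-1..1} (omega_t a)"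
  unfolding omega_t_def using pos1[of a]
  by (intro continuous_intros) (auto simp: less_imp_neq[symmetric])

lemma good_omega: "a \<in> U \<Longrightarrow> good (omega a)"
  unfolding good_def
proof (intro conjI ballI)
  fix \<mu> assume "a \<in> U" "\<mu> \<in> {-1..1::real}"
  then show "omega a \<mu> > 0" using pos1[of a \<mu>] unfolding omega_def by simp
qed (rule cont_omega)

lemma good_omega_t: "a \<in> U \<Longrightarrow> good (omega_t a)"
  unfolding good_def
proof (intro conjI ballI)
  fix \<mu> assume "a \<in> U" "\<mu> \<in> {-1..1::real}"
  then show "omega_t a \<mu> > 0" using pos1[of a \<mu>] unfolding omega_t_def by simp
qed (rule cont_omega_t)

lemma inv45: "(x::real) \<noteq> 0 \<Longrightarrow> inverse (x^4) = x * inverse (x^5)"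
  by (simp add: field_simps eval_nat_numeral)

lemma omega_rel: "a \<in> U \<Longrightarrow> \<mu> \<in> {-1..1} \<Longrightarrow> omega a \<mu> = (1 + a * \<mu>) * omega_t a \<mu>"
  using pos1[of a \<mu>] unfolding omega_def omega_t_def by (intro inv45) simp

lemma inv_alg: "(x::real) \<noteq> 0 \<Longrightarrow> - (inverse (x ^ 4) * (of_nat 4 * x ^ 3 * (0 + 1 * \<mu>)) * inverse (x ^ 4)) = -4 * \<mu> * inverse (x^5)"
  by (simp add: field_simps eval_nat_numeral)

lemma omega_deriv:
  assumes "a \<in> U" "\<mu> \<in> {-1..1}"
  shows "((\<lambda>b. omega b \<mu>) has_real_derivative (-4 * \<mu> * omega_t a \<mu>)) (at a within X)"
proof -
  have nz: "1 + a * \<mu> \<noteq> 0" using pos1[OF assms] by simp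
  have D: "((\<lambda>b. inverse ((1 + b * \<mu>) ^ 4)) has_real_derivative
      (- (inverse ((1 + a * \<mu>) ^ 4) * (of_nat 4 * (1 + a * \<mu>) ^ 3 * (0 + 1 * \<mu>)) * inverse ((1 + a * \<mu>) ^ 4)))) (at a within X)"
    using nz by (intro derivative_eq_intros) auto
  have eq: "- (inverse ((1 + a * \<mu>) ^ 4) * (of_nat 4 * (1 + a * \<mu>) ^ 3 * (0 + 1 * \<mu>)) * inverse ((1 + a * \<mu>) ^ 4))
     = -4 * \<mu> * omega_t a \<mu>"
    using inv_alg[OF nz, of \<mu>] unfolding omega_t_def by simp
  show ?thesis using D unfolding eq omega_def .
qed

lemma mom_deriv:
  assumes a: "a \<in> U"
  shows "((\<lambda>b. mom (omega b) n) has_real_derivative (-4 * mom (omega_t a) (Suc n))) (at a)"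
proof -
  have "((\<lambda>b. integral (cbox (-1) 1) (\<lambda>\<mu>. \<mu>^n * omega b \<mu>)) has_real_derivative
     integral (cbox (-1) 1) (\<lambda>\<mu>. \<mu>^n * (-4 * \<mu> * omega_t a \<mu>))) (at a within U)"
  proof (rule leibniz_rule_field_derivative[where fx = "\<lambda>b \<mu>. \<mu>^n * (-4 * \<mu> * omega_t b \<mu>)"])
    fix x t assume "x \<in> U" "t \<in> cbox (-1::real) 1"
    then show "((\<lambda>b. t ^ n * omega b t) has_real_derivative t ^ n * (- 4 * t * omega_t x t)) (at x within U)"
      using DERIV_cmult[OF omega_deriv[of x t U], of "t^n"] by (auto simp: cbox_interval mult_ac)
  next
    fix x assume "x \<in> U"
    then show "(\<lambda>\<mu>. \<mu> ^ n * omega x \<mu>) integrable_on cbox (- 1) 1"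
      unfolding cbox_interval by (intro integrable_continuous_interval continuous_intros cont_omega)
  next
    have "\<forall>z\<in>U \<times> cbox (-1) 1. (1 + fst z * snd z) ^ 5 \<noteq> 0"
      using pos1 by (auto simp: cbox_interval less_imp_neq[symmetric])
    then show "continuous_on (U \<times> cbox (- 1) 1) (\<lambda>(x, t). t ^ n * (- 4 * t * omega_t x t))"
      unfolding omega_t_def case_prod_beta by (intro continuous_intros) auto
  qed (use a in auto)
  moreover have "integral (cbox (-1) 1) (\<lambda>\<mu>. \<mu>^n * (-4 * \<mu> * omega_t a \<mu>)) = -4 * mom (omega_t a) (Suc n)"
    unfolding mom_def cbox_interval
    by (subst integral_mult_right[symmetric]) (simp add: mult_ac)
  ultimately show ?thesis using a unfolding mom_def cbox_interval
    by (simp add: at_within_open[of a U])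
qed

lemma mom_diff: "a \<in> U \<Longrightarrow> (\<lambda>b. mom (omega b) n) differentiable (at a)"
  using mom_deriv[of a n] real_differentiable_def by blast

lemma ipns_diff:
  assumes a: "a \<in> U"
    and P: "\<And>i. (\<lambda>b. coeff (P b) i) differentiable (at a)"
    and Q: "\<And>i. (\<lambda>b. coeff (Q b) i) differentiable (at a)"
  shows "(\<lambda>b. ipns n s (omega b) (P b) (Q b)) differentiable (at a)"
  unfolding ipns_def
  by (intro differentiable_sum ballI finite_atMost differentiable_mult P Q mom_diff a)

lemma coeff_gs_diff:
  assumes a: "a \<in> U"
  shows "(\<lambda>b. coeff (gs (omega b) k) l) differentiable (at a)"
proof (induction k arbitrary: l rule: less_induct)
  case (less k)
  define N where "N j b = ipns k 0 (omega b) (monom 1 k) (gs (omega b) j)" for j b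
  define D where "D j b = ipns k 0 (omega b) (gs (omega b) j) (gs (omega b) j)" for j b
  have eq: "(\<lambda>b. coeff (gs (omega b) k) l) =
      (\<lambda>b. coeff (monom 1 k) l - (\<Sum>j<k. N j b / D j b * coeff (gs (omega b) j) l))"
  proof
    fix b
    show "coeff (gs (omega b) k) l = coeff (monom 1 k) l - (\<Sum>j<k. N j b / D j b * coeff (gs (omega b) j) l)"
      by (subst gs.simps) (simp add: coeff_sum N_def D_def)
  qed
  have Dnz: "D j a \<noteq> 0" if "j < k" for j
  proof -
    have "D j a = ip (omega a) (gs (omega a) j) (gs (omega a) j)"
      unfolding D_def using that by (intro ipns_ip cont_omega a) (auto simp: gs_deg)
    also have "\<dots> > 0" by (rule ip_pos[OF good_omega[OF a] gs_nz])
    finally show ?thesis by simp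
  qed
  have dm: "(\<lambda>b. coeff (monom 1 k) i) differentiable (at a)" for i by simp
  show ?case unfolding eq
    apply (intro differentiable_diff differentiable_const differentiable_sum ballI finite_lessThan)
    apply (intro differentiable_mult differentiable_divide)
    unfolding N_def D_def
    using less Dnz[unfolded D_def] by (auto intro!: ipns_diff a dm)
qed

lemma ip_monic:
  fixes w :: "real \<Rightarrow> real"
  assumes wc: "continuous_on {-1..1} w" and f: "monic_orth_family w f"
    and q: "degree q \<le> k" "coeff q k = 1"
  shows "ip w q (f k) = ip w (monom 1 k) (f k)"
proof (cases "q - monom 1 k = 0")
  case True then show ?thesis by simp
next
  case False
  have "degree (q - monom 1 k) \<le> k" using q by (intro degree_diff_le) (auto simp: degree_monom_eq)
  moreover have "coeff (q - monom 1 k) k = 0" using q by simp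
  ultimately have "degree (q - monom 1 k) < k" using False
    by (metis le_neq_implies_less leading_coeff_0_iff)
  then have "ip w (q - monom 1 k) (f k) = 0" by (rule orth_lower[OF wc f])
  then show ?thesis by (simp add: ip_diff[OF wc])
qed

lemma phi_gs: "a \<in> U \<Longrightarrow> phi a = gs (omega a)"
  unfolding phi_def by (rule orth_polys_gs[OF good_omega])

lemma mof_phi: "a \<in> U \<Longrightarrow> monic_orth_family (omega a) (phi a)"
  unfolding phi_def by (rule orth_polys_mof[OF good_omega])

lemma mof_phi_t: "a \<in> U \<Longrightarrow> monic_orth_family (omega_t a) (phi_t a)"
  unfolding phi_t_def by (rule orth_polys_mof[OF good_omega_t])

lemma K_ip: "K a j k = ip (omega a) (monom 1 j) (phi a k)"
  unfolding K_def ip_def by (simp add: poly_monom)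

lemma K_t_ip: "K_t a j k = ip (omega_t a) (monom 1 j) (phi_t a k)"
  unfolding K_t_def ip_def by (simp add: poly_monom)

lemma K_kk: "a \<in> U \<Longrightarrow> K a k k = ip (omega a) (phi a k) (phi a k)"
  unfolding K_ip using ip_monic[OF cont_omega mof_phi, of a "phi a k" k]
  by (simp add: mof_deg[OF mof_phi] mof_lead[OF mof_phi])

lemma K_t_kk: "a \<in> U \<Longrightarrow> K_t a k k = ip (omega_t a) (phi_t a k) (phi_t a k)"
  unfolding K_t_ip using ip_monic[OF cont_omega_t mof_phi_t, of a "phi_t a k" k]
  by (simp add: mof_deg[OF mof_phi_t] mof_lead[OF mof_phi_t])

lemma ip_shift:
  assumes a: "a \<in> U"
  shows "ip (omega_t a) (q + smult a (pCons 0 q)) p = ip (omega a) q p"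
  unfolding ip_def
proof (rule integral_cong)
  fix \<mu> :: real assume "\<mu> \<in> {-1..1}"
  then show "poly (q + smult a (pCons 0 q)) \<mu> * poly p \<mu> * omega_t a \<mu> = poly q \<mu> * poly p \<mu> * omega a \<mu>"
    using omega_rel[OF a] by (simp add: algebra_simps)
qed

lemma part1:
  assumes a: "a \<in> U" and that: "\<mu> \<in> {-1..1}"
  shows "Phi a k \<mu> = a * Phi_t a (k+1) \<mu> + (K a k k / K_t a k k) * Phi_t a k \<mu>"
proof -
  let ?f = "phi a" and ?g = "phi_t a" and ?w = "omega a" and ?v = "omega_t a"
  note f = mof_phi[OF a] and g = mof_phi_t[OF a]
  define R where "R = ?f k + smult a (pCons 0 (?f k))"
  have degR: "degree R \<le> Suc k" unfolding R_def
    using mof_deg[OF f, of k]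
    by (intro degree_add_le order_trans[OF degree_smult_le]) (auto simp: degree_pCons_eq_if)
  have cR: "coeff R (Suc k) = a" unfolding R_def using mof_lead[OF f, of k] mof_deg[OF f, of k]
    by (simp add: coeff_eq_0)
  have ipR: "ip ?v R p = ip ?w (?f k) p" for p unfolding R_def by (rule ip_shift[OF a])
  have ort: "\<forall>j<k. ip ?v R (?g j) = 0"
  proof (intro allI impI)
    fix j assume "j < k"
    then show "ip ?v R (?g j) = 0" unfolding ipR
      using orth_lower[OF cont_omega[OF a] f, of "?g j" k] ip_sym mof_deg[OF g] by metis
  qed
  have R: "R = smult a (?g (Suc k)) + smult (ip ?v R (?g k) / ip ?v (?g k) (?g k)) (?g k)"
    using expand2[OF good_omega_t[OF a] g degR ort] cR by simp
  have "ip ?v R (?g k) = K a k k"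
    unfolding ipR K_ip ip_sym[of ?w "?f k"]
    using ip_monic[OF cont_omega[OF a] f, of "?g k" k] mof_deg[OF g] mof_lead[OF g] by simp
  moreover have "ip ?v (?g k) (?g k) = K_t a k k" using K_t_kk[OF a] by simp
  ultimately have R': "R = smult a (?g (Suc k)) + smult (K a k k / K_t a k k) (?g k)" using R by simp
  have "Phi a k \<mu> = omega_t a \<mu> * poly R \<mu>"
    unfolding Phi_def R_def using omega_rel[OF a that] by (simp add: algebra_simps)
  also have "\<dots> = a * Phi_t a (k+1) \<mu> + (K a k k / K_t a k k) * Phi_t a k \<mu>"
    by (subst R') (simp add: Phi_t_def algebra_simps)
  finally show ?thesis .
qed

lemma part2:
  assumes a: "a \<in> U" and mu: "\<mu> \<in> {-1..1}"
  shows "((\<lambda>b. Phi b k \<mu>) has_real_derivative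
              (-4 * Phi_t a (k+1) \<mu> + (1 / K_t a k k) * deriv (\<lambda>b. K b k k) a * Phi_t a k \<mu>)) (at a)"
proof -
  note g = mof_phi_t[OF a]
  note wc = cont_omega[OF a] and vc = cont_omega_t[OF a]
  define c where "c l b = coeff (gs (omega b) k) l" for l b
  define cd where "cd l = deriv (c l) a" for l
  have Dc: "DERIV (c l) a :> cd l" for l
    unfolding cd_def DERIV_deriv_iff_real_differentiable c_def by (rule coeff_gs_diff[OF a])
  have cd0: "cd l = 0" if "k \<le> l" for l
  proof -
    have "c l = (\<lambda>b. if l = k then 1 else 0)"
      using that by (auto simp: c_def gs_lead gs_deg coeff_eq_0)
    then show ?thesis unfolding cd_def by (simp add: DERIV_imp_deriv)
  qed
  define Dp where "Dp = (\<Sum>l<k. monom (cd l) l)"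
  have cDp: "coeff Dp l = cd l" for l
    unfolding Dp_def coeff_sum coeff_monom using cd0[of l] by (auto simp: sum.delta)
  have dDp: "degree Dp \<le> k" unfolding Dp_def
    by (rule degree_sum_le) (auto intro: order_trans[OF degree_monom_le])
  define f where "f = gs (omega a) k"
  have df: "degree f = k" and cf: "coeff f k = 1" unfolding f_def by (rule gs_deg, rule gs_lead)
  have fphi: "f = phi a k" unfolding f_def using phi_gs[OF a] by simp
  define Q where "Q = smult (-4) (pCons 0 f) + (Dp + smult a (pCons 0 Dp))"
  have polyQ: "poly Q x = -4 * x * poly f x + (1 + a * x) * poly Dp x" for x
    unfolding Q_def by (simp add: algebra_simps)
  have degQ: "degree Q \<le> Suc k" unfolding Q_def using df dDp
    by (intro degree_add_le order_trans[OF degree_smult_le]) (auto simp: degree_pCons_eq_if)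
  have cQ: "coeff Q (Suc k) = -4" unfolding Q_def using cf cd0[of k] cd0[of "Suc k"] by (simp add: cDp)

  have Dip: "DERIV (\<lambda>b. ipns k 0 (omega b) (gs (omega b) k) p) a :> ip (omega_t a) Q p"
    if dp: "degree p \<le> k" for p
  proof -
    have "DERIV (\<lambda>b. \<Sum>i\<le>k. \<Sum>j\<le>k. c i b * coeff p j * mom (omega b) (i+j+0)) a :>
        (\<Sum>i\<le>k. \<Sum>j\<le>k. c i a * coeff p j * (-4 * mom (omega_t a) (Suc (i+j+0))) + cd i * coeff p j * mom (omega a) (i+j+0))"
      by (intro DERIV_sum DERIV_mult' DERIV_cmult_right Dc mom_deriv a)
    moreover have "(\<Sum>i\<le>k. \<Sum>j\<le>k. c i a * coeff p j * (-4 * mom (omega_t a) (Suc (i+j+0))) + cd i * coeff p j * mom (omega a) (i+j+0))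
       = -4 * ipns k 1 (omega_t a) f p + ipns k 0 (omega a) Dp p"
      unfolding sum.distrib unfolding ipns_def cDp c_def f_def by (simp add: sum_distrib_left mult_ac)
    moreover have "ipns k 1 (omega_t a) f p = integral {-1..1} (\<lambda>\<mu>. \<mu>^1 * poly f \<mu> * poly p \<mu> * omega_t a \<mu>)"
      by (rule ipns_eq[OF vc]) (use df dp in auto)
    moreover have "ipns k 0 (omega a) Dp p = ip (omega a) Dp p"
      by (rule ipns_ip[OF wc dDp dp])
    moreover have "ip (omega_t a) Q p = -4 * integral {-1..1} (\<lambda>\<mu>. \<mu>^1 * poly f \<mu> * poly p \<mu> * omega_t a \<mu>) + ip (omega a) Dp p"
    proof -
      have "ip (omega_t a) Q p = integral {-1..1} (\<lambda>\<mu>. -4 * (\<mu>^1 * poly f \<mu> * poly p \<mu> * omega_t a \<mu>) + poly Dp \<mu> * poly p \<mu> * omega a \<mu>)"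
        unfolding ip_def
      proof (rule integral_cong)
        fix x :: real assume "x \<in> {-1..1}"
        then show "poly Q x * poly p x * omega_t a x = -4 * (x^1 * poly f x * poly p x * omega_t a x) + poly Dp x * poly p x * omega a x"
          unfolding polyQ using omega_rel[OF a] by (simp add: algebra_simps)
      qed
      also have "\<dots> = -4 * integral {-1..1} (\<lambda>\<mu>. \<mu>^1 * poly f \<mu> * poly p \<mu> * omega_t a \<mu>) + ip (omega a) Dp p"
        unfolding ip_def
        by (subst integral_add) (auto intro!: integrable_continuous_interval continuous_intros vc wc)
      finally show ?thesis .
    qed
    moreover have "(\<lambda>b. ipns k 0 (omega b) (gs (omega b) k) p) = (\<lambda>b. \<Sum>i\<le>k. \<Sum>j\<le>k. c i b * coeff p j * mom (omega b) (i+j+0))"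
      unfolding ipns_def c_def by simp
    ultimately show ?thesis by simp
  qed

  have ipb: "ipns k 0 (omega b) (gs (omega b) k) p = ip (omega b) (phi b k) p" if "b \<in> U" "degree p \<le> k" for b p
    using ipns_ip[OF cont_omega[OF that(1)], of "gs (omega b) k" k p] that by (simp add: gs_deg phi_gs)

  have ort: "\<forall>j<k. ip (omega_t a) Q (phi_t a j) = 0"
  proof (intro allI impI)
    fix j assume jk: "j < k"
    have dj: "degree (phi_t a j) \<le> k" using jk mof_deg[OF g, of j] by simp
    have "\<forall>b\<in>U. ipns k 0 (omega b) (gs (omega b) k) (phi_t a j) = 0"
    proof
      fix b assume b: "b \<in> U"
      have "ip (omega b) (phi_t a j) (phi b k) = 0"
        by (rule orth_lower[OF cont_omega[OF b] mof_phi[OF b]]) (use jk mof_deg[OF g, of j] in simp)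
      then show "ipns k 0 (omega b) (gs (omega b) k) (phi_t a j) = 0"
        using ipb[OF b dj] ip_sym by metis
    qed
    then have "DERIV (\<lambda>b. 0) a :> ip (omega_t a) Q (phi_t a j)"
      using has_field_derivative_transform_within_open[OF Dip[OF dj], of U "\<lambda>_. 0"] a by auto
    then show "ip (omega_t a) Q (phi_t a j) = 0" using DERIV_const DERIV_unique by blast
  qed
  have dK: "DERIV (\<lambda>b. K b k k) a :> ip (omega_t a) Q (phi_t a k)"
  proof (rule has_field_derivative_transform_within_open[OF Dip])
    show "degree (phi_t a k) \<le> k" using mof_deg[OF g] by simp
    fix b assume b: "b \<in> U"
    have "ipns k 0 (omega b) (gs (omega b) k) (phi_t a k) = ip (omega b) (phi_t a k) (phi b k)"
      using ipb[OF b, of "phi_t a k"] mof_deg[OF g, of k] ip_sym[of "omega b" "phi b k" "phi_t a k"] by simp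
    also have "\<dots> = K b k k" unfolding K_ip
      by (rule ip_monic[OF cont_omega[OF b] mof_phi[OF b]]) (use mof_deg[OF g] mof_lead[OF g] in auto)
    finally show "ipns k 0 (omega b) (gs (omega b) k) (phi_t a k) = K b k k" .
  qed (use a in auto)
  have derK: "deriv (\<lambda>b. K b k k) a = ip (omega_t a) Q (phi_t a k)"
    by (rule DERIV_imp_deriv[OF dK])
  have Qexp: "Q = smult (-4) (phi_t a (Suc k)) + smult (deriv (\<lambda>b. K b k k) a / K_t a k k) (phi_t a k)"
    using expand2[OF good_omega_t[OF a] g degQ ort] cQ derK K_t_kk[OF a] by simp

  have G: "DERIV (\<lambda>b. poly (gs (omega b) k) \<mu>) a :> poly Dp \<mu>"
  proof -
    have "DERIV (\<lambda>b. \<Sum>l\<le>k. c l b * \<mu>^l) a :> (\<Sum>l\<le>k. cd l * \<mu>^l)"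
      by (intro DERIV_sum DERIV_cmult_right Dc)
    moreover have "(\<lambda>b. poly (gs (omega b) k) \<mu>) = (\<lambda>b. \<Sum>l\<le>k. c l b * \<mu>^l)"
      unfolding c_def by (intro ext poly_bound) (simp add: gs_deg)
    moreover have "poly Dp \<mu> = (\<Sum>l\<le>k. cd l * \<mu>^l)"
      using poly_bound[OF dDp] cDp by simp
    ultimately show ?thesis by simp
  qed
  have P: "DERIV (\<lambda>b. omega b \<mu> * poly (gs (omega b) k) \<mu>) a :>
      omega a \<mu> * poly Dp \<mu> + (-4 * \<mu> * omega_t a \<mu>) * poly (gs (omega a) k) \<mu>"
    by (rule DERIV_mult'[OF omega_deriv[OF a mu] G])
  have P2: "DERIV (\<lambda>b. Phi b k \<mu>) a :> omega a \<mu> * poly Dp \<mu> + (-4 * \<mu> * omega_t a \<mu>) * poly (gs (omega a) k) \<mu>"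
    by (rule has_field_derivative_transform_within_open[OF P, of U]) (use a in \<open>auto simp: Phi_def phi_gs\<close>)
  have "omega a \<mu> * poly Dp \<mu> + (-4 * \<mu> * omega_t a \<mu>) * poly (gs (omega a) k) \<mu> = omega_t a \<mu> * poly Q \<mu>"
    unfolding polyQ f_def[symmetric] using omega_rel[OF a mu] by (simp add: algebra_simps)
  also have "\<dots> = -4 * Phi_t a (k+1) \<mu> + (1 / K_t a k k) * deriv (\<lambda>b. K b k k) a * Phi_t a k \<mu>"
    by (subst Qexp) (simp add: Phi_t_def algebra_simps)
  finally show ?thesis using P2 by simp
qed


theorem lemma2:
  fixes \<alpha> :: real and k :: nat
  assumes "-1 < \<alpha>" and "\<alpha> < 1"
  shows "\<forall>\<mu>\<in>{-1..1}.
           Phi \<alpha> k \<mu> = \<alpha> * Phi_t \<alpha> (k+1) \<mu> + (K \<alpha> k k / K_t \<alpha> k k) * Phi_t \<alpha> k \<mu>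
         \<and> ((\<lambda>a. Phi a k \<mu>) has_real_derivative
              (-4 * Phi_t \<alpha> (k+1) \<mu>
               + (1 / K_t \<alpha> k k) * deriv (\<lambda>a. K a k k) \<alpha> * Phi_t \<alpha> k \<mu>)) (at \<alpha>)"
proof (intro ballI conjI)
  fix \<mu> :: real assume mu: "\<mu> \<in> {-1..1}"
  have a: "\<alpha> \<in> U" using assms by simp
  show "Phi \<alpha> k \<mu> = \<alpha> * Phi_t \<alpha> (k+1) \<mu> + (K \<alpha> k k / K_t \<alpha> k k) * Phi_t \<alpha> k \<mu>"
    by (rule part1[OF a mu])
  show "((\<lambda>a. Phi a k \<mu>) has_real_derivative
              (-4 * Phi_t \<alpha> (k+1) \<mu>
               + (1 / K_t \<alpha> k k) * deriv (\<lambda>a. K a k k) \<alpha> * Phi_t \<alpha> k \<mu>)) (at \<alpha>)"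
    by (rule part2[OF a mu])
qed

end
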